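(* Let $K\ge1$, $T\ge1$ and $\ell_1,\dots,\ell_T\in[0,1]^K$, and suppose $H^{\mathrm{ah}}_T\ge L^*_T$. Then the cumulative loss variance for AdaHedge satisfies \[ V^{\mathrm{ah}}_T\le\frac{L^*_T(T-L^*_T)}{T}+2\Delta^{\mathrm{ah}}_T. \]
   Context: Hedge setting: $K$ experts; in round $t$ the learner chooses a probability vector $w_t$, then $\ell_t$ is revealed and the learner suffers $h_t=\sum_kw_{t,k}\ell_{t,k}$. Write $L_{t,k}=\sum_{s=1}^t\ell_{s,k}$ ($L_{0,k}=0$), $L^*_t=\min_kL_{t,k}$, $H_T=\sum_{t\le T}h_t$. Exponential weights with learning rate $\eta\in(0,\infty]$ at time $t$: $w_{t,k}=e^{-\eta L_{t-1,k}}/\sum_je^{-\eta L_{t-1,j}}$ if $\eta<\infty$; for $\eta=\infty$, $w_t$ uniform on $\{k:L_{t-1,k}=L^*_{t-1}\}$. With learning rate $\eta_t$ in round $t$: mix loss $m_t=-\frac1{\eta_t}\ln\sum_kw_{t,k}e^{-\eta_t\ell_{t,k}}$ if $\eta_t<\infty$, $m_t=L^*_t-L^*_{t-1}$ if $\eta_t=\infty$; mixability gap $\delta_t=h_t-m_t$; loss variance $v_t=\sum_kw_{t,k}(\ell_{t,k}-h_t)^2$. AdaHedge: $\Delta^{\mathrm{ah}}_0=0$; in round $t$, $\eta^{\mathrm{ah}}_t=\ln K/\Delta^{\mathrm{ah}}_{t-1}$ ($=\infty$ if $\Delta^{\mathrm{ah}}_{t-1}=0$), weights are exponential weights with learning rate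 $\eta^{\mathrm{ah}}_t$ from $L_{t-1}$, and $\Delta^{\mathrm{ah}}_t=\Delta^{\mathrm{ah}}_{t-1}+\delta^{\mathrm{ah}}_t$. $H^{\mathrm{ah}}_T$ is AdaHedge's cumulative loss and $V^{\mathrm{ah}}_T=\sum_{t\le T}v^{\mathrm{ah}}_t$. *)

theory Defs
  imports "HOL-Analysis.Analysis" "HOL-Library.Extended_Real"
begin

text \<open>Hedge setting. Experts are indexed by k < K (K :: nat). A loss sequence is
 l :: nat => nat => real, with l t k the loss of expert k in round t (rounds t = 1, 2, ...).\<close>

definition cumL :: "(nat \<Rightarrow> nat \<Rightarrow> real) \<Rightarrow> nat \<Rightarrow> nat \<Rightarrow> real" where
  "cumL l t k = (\<Sum>s\<in>{1..t}. l s k)"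

definition Lstar :: "nat \<Rightarrow> (nat \<Rightarrow> nat \<Rightarrow> real) \<Rightarrow> nat \<Rightarrow> real" where
  "Lstar K l t = Min ((\<lambda>k. cumL l t k) ` {..<K})"

definition ew_weight :: "nat \<Rightarrow> (nat \<Rightarrow> nat \<Rightarrow> real) \<Rightarrow> ereal \<Rightarrow> nat \<Rightarrow> nat \<Rightarrow> real" where
  "ew_weight K l eta t k =
     (if eta = \<infinity> then
        (if k < K \<and> cumL l (t - 1) k = Lstar K l (t - 1)
         then 1 / real (card {j\<in>{..<K}. cumL l (t - 1) j = Lstar K l (t - 1)}) else 0)
      else
        (if k < K then exp (- real_of_ereal eta * cumL l (t - 1) k) /
            (\<Sum>j<K. exp (- real_of_ereal eta * cumL l (t - 1) j)) else 0))"

definition hedge_loss :: "nat \<Rightarrow> (nat \<Rightarrow> nat \<Rightarrow> real) \<Rightarrow> ereal \<Rightarrow> nat \<Rightarrow> real" where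
  "hedge_loss K l eta t = (\<Sum>k<K. ew_weight K l eta t k * l t k)"

definition mix_loss :: "nat \<Rightarrow> (nat \<Rightarrow> nat \<Rightarrow> real) \<Rightarrow> ereal \<Rightarrow> nat \<Rightarrow> real" where
  "mix_loss K l eta t =
     (if eta = \<infinity> then Lstar K l t - Lstar K l (t - 1)
      else - (1 / real_of_ereal eta) *
             ln (\<Sum>k<K. ew_weight K l eta t k * exp (- real_of_ereal eta * l t k)))"

definition mix_gap :: "nat \<Rightarrow> (nat \<Rightarrow> nat \<Rightarrow> real) \<Rightarrow> ereal \<Rightarrow> nat \<Rightarrow> real" where
  "mix_gap K l eta t = hedge_loss K l eta t - mix_loss K l eta t"

definition loss_var :: "nat \<Rightarrow> (nat \<Rightarrow> nat \<Rightarrow> real) \<Rightarrow> ereal \<Rightarrow> nat \<Rightarrow> real" where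
  "loss_var K l eta t =
     (\<Sum>k<K. ew_weight K l eta t k * (l t k - hedge_loss K l eta t)\<^sup>2)"

definition ah_eta :: "nat \<Rightarrow> real \<Rightarrow> ereal" where
  "ah_eta K D = (if D = 0 then \<infinity> else ereal (ln (real K) / D))"

fun ah_Delta :: "nat \<Rightarrow> (nat \<Rightarrow> nat \<Rightarrow> real) \<Rightarrow> nat \<Rightarrow> real" where
  "ah_Delta K l 0 = 0"
| "ah_Delta K l (Suc t) =
     ah_Delta K l t + mix_gap K l (ah_eta K (ah_Delta K l t)) (Suc t)"

definition ah_rate :: "nat \<Rightarrow> (nat \<Rightarrow> nat \<Rightarrow> real) \<Rightarrow> nat \<Rightarrow> ereal" where
  "ah_rate K l t = ah_eta K (ah_Delta K l (t - 1))"

definition ah_H :: "nat \<Rightarrow> (nat \<Rightarrow> nat \<Rightarrow> real) \<Rightarrow> nat \<Rightarrow> real" where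
  "ah_H K l T = (\<Sum>t\<in>{1..T}. hedge_loss K l (ah_rate K l t) t)"

definition ah_V :: "nat \<Rightarrow> (nat \<Rightarrow> nat \<Rightarrow> real) \<Rightarrow> nat \<Rightarrow> real" where
  "ah_V K l T = (\<Sum>t\<in>{1..T}. loss_var K l (ah_rate K l t) t)"

end

theory Submission imports Defs begin

lemma lessThan_ne[simp]: "K \<ge> 1 \<Longrightarrow> {..<K} \<noteq> {}" for K :: nat
  by (metis lessThan_iff empty_iff less_le_trans zero_less_one)

lemma cumL_0[simp]: "cumL l 0 k = 0" by (simp add: cumL_def)
lemma cumL_Suc: "cumL l (Suc t) k = cumL l t k + l (Suc t) k" by (simp add: cumL_def)

lemma Lstar_0: "K \<ge> 1 \<Longrightarrow> Lstar K l 0 = 0"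
  by (simp add: Lstar_def image_constant_conv)

lemma Lstar_in: "K \<ge> 1 \<Longrightarrow> \<exists>k<K. cumL l t k = Lstar K l t"
proof -
  assume "K \<ge> 1"
  then have "Lstar K l t \<in> (\<lambda>k. cumL l t k) ` {..<K}" unfolding Lstar_def
    by (intro Min_in) auto
  then show ?thesis by auto
qed

lemma Lstar_le: "k < K \<Longrightarrow> Lstar K l t \<le> cumL l t k"
  unfolding Lstar_def by (intro Min_le) auto

definition Phi :: "nat \<Rightarrow> (nat \<Rightarrow> real) \<Rightarrow> real \<Rightarrow> real" where
  "Phi K x e = - (1 / e) * ln ((\<Sum>k<K. exp (- e * x k)) / real K)"

lemma A_pos: "K \<ge> 1 \<Longrightarrow> 0 < (\<Sum>k<K. exp (- e * x k)) / real K"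
  by (intro divide_pos_pos sum_pos) auto

lemma A_pow:
  assumes K: "K \<ge> 1" and ab: "0 < a" "a \<le> b"
  shows "(\<Sum>k<K. exp (- a * x k)) / real K \<le> ((\<Sum>k<K. exp (- b * x k)) / real K) powr (a / b)"
proof -
  define c where "c = (\<Sum>k<K. exp (- b * x k)) / real K"
  define p where "p = a / b"
  have c: "c > 0" unfolding c_def using A_pos[OF K] .
  have p: "0 < p" "p \<le> 1" using ab by (auto simp: p_def)
  have Y: "exp (- b * x k) powr p = exp (- a * x k)" for k
    using ab by (simp add: powr_def p_def)
  have y: "exp (- a * x k) * c powr (1 - p) \<le> p * exp (- b * x k) + (1 - p) * c" for k
    using Youngs_inequality_0[of p "1 - p" "exp (- b * x k)" c] p c Y by auto
  have "(\<Sum>k<K. exp (- a * x k)) * c powr (1 - p) \<le> (\<Sum>k<K. p * exp (- b * x k) + (1 - p) * c)"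
    unfolding sum_distrib_right by (intro sum_mono y)
  also have "\<dots> = p * (c * real K) + (1 - p) * c * real K"
    using K by (simp add: sum.distrib sum_distrib_left[symmetric] c_def)
  also have "\<dots> = c * real K" by (simp add: algebra_simps)
  finally have "(\<Sum>k<K. exp (- a * x k)) / real K * c powr (1 - p) \<le> c" 
    using K by (simp add: field_simps)
  moreover have "c = c powr p * c powr (1 - p)" using c by (simp add: powr_add[symmetric])
  ultimately have "(\<Sum>k<K. exp (- a * x k)) / real K * c powr (1 - p) \<le> c powr p * c powr (1 - p)" by simp
  moreover have "c powr (1 - p) > 0" using c by simp
  ultimately have "(\<Sum>k<K. exp (- a * x k)) / real K \<le> c powr p"
    by (metis mult_right_le_imp_le order_less_le)
  then show ?thesis unfolding c_def p_def .
qed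

lemma Phi_mono:
  assumes K: "K \<ge> 1" and ab: "0 < a" "a \<le> b"
  shows "Phi K x b \<le> Phi K x a"
proof -
  define Aa where "Aa = (\<Sum>k<K. exp (- a * x k)) / real K"
  define Ab where "Ab = (\<Sum>k<K. exp (- b * x k)) / real K"
  have pa: "Aa > 0" "Ab > 0" using A_pos[OF K] by (auto simp: Aa_def Ab_def)
  have "Aa \<le> Ab powr (a / b)" using A_pow[OF K ab] by (simp add: Aa_def Ab_def)
  then have "ln Aa \<le> ln (Ab powr (a / b))" using pa by (subst ln_le_cancel_iff) auto
  also have "\<dots> = (a / b) * ln Ab" using pa by (simp add: ln_powr)
  finally have "ln Aa \<le> (a / b) * ln Ab" .
  then have "(1 / a) * ln Aa \<le> (1 / a) * ((a / b) * ln Ab)" using ab by (intro mult_left_mono) auto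
  also have "\<dots> = (1 / b) * ln Ab" using ab by simp
  finally show ?thesis unfolding Phi_def Aa_def[symmetric] Ab_def[symmetric] by simp
qed

lemma Phi_bounds:
  assumes K: "K \<ge> 1" and e: "e > 0"
  shows "Min (x ` {..<K}) \<le> Phi K x e" "Phi K x e \<le> Min (x ` {..<K}) + ln (real K) / e"
proof -
  define m where "m = Min (x ` {..<K})"
  have "m \<in> x ` {..<K}" unfolding m_def using K by (intro Min_in) auto
  then obtain j where j: "j < K" "x j = m" by auto
  have le: "m \<le> x k" if "k < K" for k unfolding m_def using that by (intro Min_le) auto
  define A where "A = (\<Sum>k<K. exp (- e * x k)) / real K"
  have Ap: "A > 0" using A_pos[OF K] by (simp add: A_def)
  have "(\<Sum>k<K. exp (- e * x k)) \<le> (\<Sum>k<K. exp (- e * m))"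
    using le e by (intro sum_mono) (auto simp: mult_le_cancel_left)
  then have "A \<le> exp (- e * m)" using K by (simp add: A_def field_simps)
  then have "ln A \<le> - e * m" using Ap by (metis ln_exp ln_le_cancel_iff exp_gt_zero)
  then have "m \<le> - (1 / e) * ln A" using e by (simp add: field_simps)
  then show "Min (x ` {..<K}) \<le> Phi K x e" by (simp add: Phi_def A_def m_def)
  have "exp (- e * m) \<le> (\<Sum>k<K. exp (- e * x k))"
    using j member_le_sum[of j "{..<K}" "\<lambda>k. exp (- e * x k)"] by auto
  then have "exp (- e * m) / real K \<le> A" using K by (simp add: A_def divide_right_mono)
  then have "ln (exp (- e * m) / real K) \<le> ln A" using K Ap by (subst ln_le_cancel_iff) auto
  then have "- e * m - ln (real K) \<le> ln A" using K by (simp add: ln_div)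
  then have "- (1 / e) * ln A \<le> m + ln (real K) / e" using e by (simp add: field_simps)
  then show "Phi K x e \<le> Min (x ` {..<K}) + ln (real K) / e" by (simp add: Phi_def A_def m_def)
qed

lemma w_nonneg: "ew_weight K l e t k \<ge> 0"
  unfolding ew_weight_def by (auto intro!: divide_nonneg_nonneg sum_nonneg)

lemma w_sum:
  assumes K: "K \<ge> 1"
  shows "(\<Sum>k<K. ew_weight K l e t k) = 1"
proof (cases "e = \<infinity>")
  case True
  define S where "S = {j\<in>{..<K}. cumL l (t - 1) j = Lstar K l (t - 1)}"
  have "S \<noteq> {}" using Lstar_in[OF K, of l "t - 1"] by (auto simp: S_def)
  moreover have fS: "finite S" by (simp add: S_def)
  ultimately have c: "card S > 0" by (simp add: card_gt_0_iff)
  have "(\<Sum>k<K. ew_weight K l e t k) = (\<Sum>k<K. if cumL l (t - 1) k = Lstar K l (t - 1) then 1 / real (card S) else 0)"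
    using True by (intro sum.cong) (auto simp: ew_weight_def S_def)
  also have "\<dots> = (\<Sum>k\<in>S. 1 / real (card S))"
    unfolding S_def by (subst sum.inter_filter) auto
  also have "\<dots> = 1" using c by simp
  finally show ?thesis .
next
  case False
  define Z where "Z = (\<Sum>j<K. exp (- real_of_ereal e * cumL l (t - 1) j))"
  have Z: "Z > 0" unfolding Z_def using K by (intro sum_pos) auto
  have "(\<Sum>k<K. ew_weight K l e t k) = (\<Sum>k<K. exp (- real_of_ereal e * cumL l (t - 1) k) / Z)"
    using False by (intro sum.cong) (auto simp: ew_weight_def Z_def)
  also have "\<dots> = 1" using Z by (simp add: sum_divide_distrib[symmetric] Z_def)
  finally show ?thesis .
qed

lemma mix_real:
  assumes K: "K \<ge> 1" and t: "t \<ge> 1"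
  shows "mix_loss K l (ereal e) t = Phi K (cumL l t) e - Phi K (cumL l (t - 1)) e"
proof -
  obtain s where s: "t = Suc s" using t by (cases t) auto
  define Z where "Z = (\<Sum>j<K. exp (- e * cumL l s j))"
  define N where "N = (\<Sum>j<K. exp (- e * cumL l t j))"
  have Z: "Z > 0" unfolding Z_def using K by (intro sum_pos) auto
  have N: "N > 0" unfolding N_def using K by (intro sum_pos) auto
  have "(\<Sum>k<K. ew_weight K l (ereal e) t k * exp (- e * l t k)) = (\<Sum>k<K. exp (- e * cumL l t k) / Z)"
    by (intro sum.cong) (auto simp: ew_weight_def Z_def s cumL_Suc algebra_simps simp flip: exp_add)
  also have "\<dots> = N / Z" by (simp add: N_def sum_divide_distrib)
  finally have eq: "(\<Sum>k<K. ew_weight K l (ereal e) t k * exp (- e * l t k)) = N / Z" .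
  have "ln (N / Z) = ln (N / real K) - ln (Z / real K)" using N Z K by (simp add: ln_div)
  then show ?thesis unfolding mix_loss_def Phi_def using eq
    by (simp add: N_def Z_def s right_diff_distrib)
qed

lemma gap_real:
  assumes K: "K \<ge> 1" and e: "e > 0"
  shows "mix_gap K l (ereal e) t \<ge> 0"
proof -
  define w where "w k = ew_weight K l (ereal e) t k" for k
  define h where "h = hedge_loss K l (ereal e) t"
  have hw: "h = (\<Sum>k<K. w k * l t k)" by (simp add: h_def w_def hedge_loss_def)
  have "exp (\<Sum>k<K. w k *\<^sub>R (- e * l t k)) \<le> (\<Sum>k<K. w k * exp (- e * l t k))"
    using K by (intro convex_on_sum[OF _ _ exp_convex]) (auto simp: w_def w_nonneg w_sum)
  moreover have "(\<Sum>k<K. w k *\<^sub>R (- e * l t k)) = - e * h"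
    by (simp add: hw sum_distrib_left algebra_simps)
  ultimately have ex: "exp (- e * h) \<le> (\<Sum>k<K. w k * exp (- e * l t k))" by simp
  have "- e * h \<le> ln (\<Sum>k<K. w k * exp (- e * l t k))"
    using ex by (metis exp_gt_zero ln_exp ln_le_cancel_iff order_less_le_trans)
  then have "- (1 / e) * ln (\<Sum>k<K. w k * exp (- e * l t k)) \<le> h"
    using e by (simp add: field_simps)
  then show ?thesis unfolding mix_gap_def mix_loss_def w_def h_def by simp
qed

lemma gap_inf:
  assumes K: "K \<ge> 1" and t: "t \<ge> 1"
  shows "mix_gap K l \<infinity> t \<ge> 0"
proof -
  obtain s where s: "t = Suc s" using t by (cases t) auto
  define d where "d = Lstar K l t - Lstar K l (t - 1)"
  have "(\<Sum>k<K. ew_weight K l \<infinity> t k * d) \<le> (\<Sum>k<K. ew_weight K l \<infinity> t k * l t k)"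
  proof (intro sum_mono)
    fix k assume k: "k \<in> {..<K}"
    show "ew_weight K l \<infinity> t k * d \<le> ew_weight K l \<infinity> t k * l t k"
    proof (cases "cumL l (t - 1) k = Lstar K l (t - 1)")
      case True
      have "Lstar K l t \<le> cumL l t k" using k by (intro Lstar_le) auto
      then have "d \<le> l t k" using True by (simp add: d_def s cumL_Suc)
      then show ?thesis by (intro mult_left_mono w_nonneg)
    qed (simp add: ew_weight_def)
  qed
  then have "d \<le> hedge_loss K l \<infinity> t"
    by (simp add: sum_distrib_right[symmetric] w_sum[OF K] hedge_loss_def)
  then show ?thesis by (simp add: mix_gap_def mix_loss_def d_def)
qed

lemma gap_K1:
  assumes K: "K = 1" and t: "t \<ge> 1"
  shows "mix_gap K l \<infinity> t = 0"
proof -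
  obtain s where s: "t = Suc s" using t by (cases t) auto
  have L: "Lstar (Suc 0) l u = cumL l u 0" for u by (simp add: Lstar_def lessThan_Suc)
  have c: "{j. j = (0::nat) \<and> cumL l (t - Suc 0) j = cumL l (t - Suc 0) 0} = {0}" by auto
  have w: "ew_weight K l \<infinity> t 0 = 1" by (simp add: ew_weight_def L K c)
  show ?thesis using w by (simp add: mix_gap_def mix_loss_def hedge_loss_def K L s cumL_Suc)
qed

definition Psi :: "nat \<Rightarrow> (nat \<Rightarrow> nat \<Rightarrow> real) \<Rightarrow> real \<Rightarrow> nat \<Rightarrow> real" where
  "Psi K l D t = (if D = 0 then Lstar K l t else Phi K (cumL l t) (ln (real K) / D))"

definition okD :: "nat \<Rightarrow> real \<Rightarrow> bool" where
  "okD K D \<longleftrightarrow> D \<ge> 0 \<and> (K < 2 \<longrightarrow> D = 0)"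

lemma lnK_pos: "okD K D \<Longrightarrow> D \<noteq> 0 \<Longrightarrow> ln (real K) / D > 0"
  unfolding okD_def by (auto intro!: divide_pos_pos)

lemma mix_Psi:
  assumes K: "K \<ge> 1" and ok: "okD K D" and t: "t \<ge> 1"
  shows "mix_loss K l (ah_eta K D) t = Psi K l D t - Psi K l D (t - 1)"
proof (cases "D = 0")
  case True then show ?thesis by (simp add: ah_eta_def mix_loss_def Psi_def)
next
  case False then show ?thesis using mix_real[OF K t] by (simp add: ah_eta_def Psi_def)
qed

lemma gap_Psi:
  assumes K: "K \<ge> 1" and ok: "okD K D" and t: "t \<ge> 1"
  shows "mix_gap K l (ah_eta K D) t \<ge> 0"
proof (cases "D = 0")
  case True then show ?thesis using gap_inf[OF K t] by (simp add: ah_eta_def)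
next
  case False then show ?thesis using gap_real[OF K lnK_pos[OF ok False]] by (simp add: ah_eta_def)
qed

lemma Lstar_eq: "Lstar K l t = Min (cumL l t ` {..<K})" by (simp add: Lstar_def)

lemma Psi_mono:
  assumes K: "K \<ge> 1" and ok1: "okD K D1" and ok2: "okD K D2" and le: "D1 \<le> D2"
  shows "Psi K l D1 t \<le> Psi K l D2 t"
proof (cases "D1 = 0")
  case True
  then show ?thesis
  proof (cases "D2 = 0")
    case False
    then show ?thesis using True Phi_bounds(1)[OF K lnK_pos[OF ok2 False], of "cumL l t"]
      by (simp add: Psi_def Lstar_eq)
  qed (simp add: Psi_def)
next
  case False
  then have D2: "D2 \<noteq> 0" "D1 > 0" using ok1 le unfolding okD_def by auto
  have "ln (real K) / D2 \<le> ln (real K) / D1"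
    using ok1 False le D2 unfolding okD_def by (intro divide_left_mono) auto
  then show ?thesis using False D2 Phi_mono[OF K lnK_pos[OF ok2 D2(1)]]
    by (simp add: Psi_def)
qed

lemma Psi_le:
  assumes K: "K \<ge> 1" and ok: "okD K D"
  shows "Psi K l D t \<le> Lstar K l t + D"
proof (cases "D = 0")
  case False
  have "ln (real K) \<noteq> 0" using lnK_pos[OF ok False] by (metis div_0 order_less_irrefl)
  then have "ln (real K) / (ln (real K) / D) = D" using False by simp
  then show ?thesis using False Phi_bounds(2)[OF K lnK_pos[OF ok False], of "cumL l t"]
    by (simp add: Psi_def Lstar_eq)
qed (simp add: Psi_def)

lemma Psi_0:
  assumes K: "K \<ge> 1"
  shows "Psi K l D 0 = 0"
  using K by (simp add: Psi_def Lstar_0 Phi_def)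

lemma Delta_ok:
  assumes K: "K \<ge> 1"
  shows "okD K (ah_Delta K l t)"
proof (induction t)
  case 0 then show ?case by (simp add: okD_def)
next
  case (Suc t)
  have g: "mix_gap K l (ah_eta K (ah_Delta K l t)) (Suc t) \<ge> 0"
    by (rule gap_Psi[OF K Suc]) simp
  show ?case
  proof (cases "K < 2")
    case True
    then have K1: "K = 1" using K by simp
    have "ah_Delta K l t = 0" using Suc True by (simp add: okD_def)
    then show ?thesis using gap_K1[OF K1, of "Suc t" l] by (simp add: okD_def ah_eta_def)
  next
    case False then show ?thesis using Suc g by (simp add: okD_def)
  qed
qed

lemma Delta_mono:
  assumes K: "K \<ge> 1"
  shows "ah_Delta K l t \<le> ah_Delta K l (Suc t)"
  using gap_Psi[OF K Delta_ok[OF K, of l t], of "Suc t"] by simp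

lemma Delta_sum: "ah_Delta K l T = (\<Sum>t\<in>{1..T}. mix_gap K l (ah_rate K l t) t)"
  by (induction T) (simp_all add: ah_rate_def)

lemma msum:
  assumes K: "K \<ge> 1"
  shows "(\<Sum>t\<in>{1..n}. mix_loss K l (ah_rate K l t) t) \<le> Psi K l (ah_Delta K l n) n"
proof (induction n)
  case 0 then show ?case by (simp add: Psi_0[OF K])
next
  case (Suc n)
  have "(\<Sum>t\<in>{1..Suc n}. mix_loss K l (ah_rate K l t) t)
      = (\<Sum>t\<in>{1..n}. mix_loss K l (ah_rate K l t) t)
        + (Psi K l (ah_Delta K l n) (Suc n) - Psi K l (ah_Delta K l n) n)"
    using mix_Psi[OF K Delta_ok[OF K, of l n], where t="Suc n" and l=l] by (simp add: ah_rate_def)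
  also have "\<dots> \<le> Psi K l (ah_Delta K l n) (Suc n)" using Suc by simp
  also have "\<dots> \<le> Psi K l (ah_Delta K l (Suc n)) (Suc n)"
    by (rule Psi_mono[OF K Delta_ok[OF K] Delta_ok[OF K] Delta_mono[OF K]])
  finally show ?case .
qed

lemma regret:
  assumes K: "K \<ge> 1"
  shows "ah_H K l T \<le> Lstar K l T + 2 * ah_Delta K l T"
proof -
  have "ah_H K l T = (\<Sum>t\<in>{1..T}. mix_loss K l (ah_rate K l t) t) + ah_Delta K l T"
    unfolding ah_H_def Delta_sum by (simp add: mix_gap_def sum.distrib[symmetric])
  also have "\<dots> \<le> Psi K l (ah_Delta K l T) T + ah_Delta K l T" using msum[OF K] by simp
  also have "\<dots> \<le> Lstar K l T + 2 * ah_Delta K l T" using Psi_le[OF K Delta_ok[OF K, of l T], of l T] by simp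
  finally show ?thesis .
qed

lemma var_le:
  assumes K: "K \<ge> 1" and b: "\<And>k. k < K \<Longrightarrow> 0 \<le> l t k \<and> l t k \<le> 1"
  shows "loss_var K l e t \<le> hedge_loss K l e t - (hedge_loss K l e t)\<^sup>2"
proof -
  define w where "w k = ew_weight K l e t k" for k
  define h where "h = hedge_loss K l e t"
  have hw: "h = (\<Sum>k<K. w k * l t k)" by (simp add: h_def w_def hedge_loss_def)
  have ws: "(\<Sum>k<K. w k) = 1" using w_sum[OF K] by (simp add: w_def)
  have "loss_var K l e t = (\<Sum>k<K. w k * (l t k)\<^sup>2 - 2 * h * (w k * l t k) + h\<^sup>2 * w k)"
    unfolding loss_var_def w_def[symmetric] h_def[symmetric]
    by (intro sum.cong) (auto simp: power2_eq_square algebra_simps)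
  also have "\<dots> = (\<Sum>k<K. w k * (l t k)\<^sup>2) - h\<^sup>2"
    by (simp add: sum.distrib sum_subtractf sum_distrib_left[symmetric] hw[symmetric] ws power2_eq_square)
  also have "\<dots> \<le> h - h\<^sup>2"
  proof -
    have "(\<Sum>k<K. w k * (l t k)\<^sup>2) \<le> (\<Sum>k<K. w k * l t k)"
    proof (intro sum_mono mult_left_mono)
      fix k assume "k \<in> {..<K}"
      then have "0 \<le> l t k" "l t k \<le> 1" using b by auto
      then show "(l t k)\<^sup>2 \<le> l t k" using mult_left_le[of "l t k" "l t k"] by (simp add: power2_eq_square)
    qed (simp add: w_def w_nonneg)
    then show ?thesis using hw by simp
  qed
  finally have "loss_var K l e t \<le> h - h\<^sup>2" .
  then show ?thesis by (simp add: h_def)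
qed

lemma hedge_nonneg:
  assumes "\<And>k. k < K \<Longrightarrow> 0 \<le> l t k"
  shows "hedge_loss K l e t \<ge> 0"
  unfolding hedge_loss_def using assms by (intro sum_nonneg mult_nonneg_nonneg w_nonneg) auto

theorem lemma7:
  fixes K T :: nat and l :: "nat \<Rightarrow> nat \<Rightarrow> real"
  assumes "K \<ge> 1" and "T \<ge> 1"
    and "\<And>t k. t \<in> {1..T} \<Longrightarrow> k < K \<Longrightarrow> 0 \<le> l t k \<and> l t k \<le> 1"
    and "ah_H K l T \<ge> Lstar K l T"
  shows "ah_V K l T \<le> Lstar K l T * (real T - Lstar K l T) / real T + 2 * ah_Delta K l T"
proof -
  note K = assms(1)
  define h where "h t = hedge_loss K l (ah_rate K l t) t" for t
  define H where "H = ah_H K l T"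
  define L where "L = Lstar K l T"
  define D where "D = ah_Delta K l T"
  have HS: "H = (\<Sum>t\<in>{1..T}. h t)" by (simp add: H_def ah_H_def h_def)
  have V1: "ah_V K l T \<le> (\<Sum>t\<in>{1..T}. h t - (h t)\<^sup>2)"
    unfolding ah_V_def h_def using assms(3) by (intro sum_mono var_le[OF K]) auto
  have CS: "(\<Sum>t\<in>{1..T}. h t * 1)\<^sup>2 \<le> (\<Sum>t\<in>{1..T}. (h t)\<^sup>2) * (\<Sum>t\<in>{1..T}. 1\<^sup>2)"
    by (rule Cauchy_Schwarz_ineq_sum)
  then have CS': "H\<^sup>2 \<le> (\<Sum>t\<in>{1..T}. (h t)\<^sup>2) * real T" by (simp add: HS)
  have Tp: "real T > 0" using assms(2) by simp
  have V2: "ah_V K l T \<le> H - H\<^sup>2 / real T"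
  proof -
    have "H\<^sup>2 / real T \<le> (\<Sum>t\<in>{1..T}. (h t)\<^sup>2)" using CS' Tp by (simp add: divide_le_eq)
    then show ?thesis using V1 by (simp add: sum_subtractf HS)
  qed
  obtain k where k: "k < K" "cumL l T k = L" using Lstar_in[OF K, of l T] by (auto simp: L_def)
  have L0: "L \<ge> 0" using k assms(3) unfolding cumL_def[symmetric] by (auto simp: cumL_def[of l T k] intro!: sum_nonneg simp flip: k(2))
  have HL: "L \<le> H" using assms(4) by (simp add: H_def L_def)
  have HD: "H \<le> L + 2 * D" using regret[OF K] by (simp add: H_def L_def D_def)
  have "L * L \<le> H * H" using L0 HL by (intro mult_mono) auto
  then have "H - H\<^sup>2 / real T \<le> L * (real T - L) / real T + (H - L)"
    using Tp by (simp add: field_simps power2_eq_square)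
  then show ?thesis using V2 HD unfolding H_def[symmetric] L_def[symmetric] D_def[symmetric] by linarith
qed

end
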